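(* Let $(H_1,+_1,\circ_1)$ and $(H_2,+_2,\circ_2)$ be commutative multiplicative hyperrings with identities $1_{H_1},1_{H_2}$, and let $P_1$ and $P_2$ be nonzero proper strong $\mathcal{C}$-hyperideals of $H_1$ and $H_2$, respectively. Then $P_1\times P_2$ is an sdf-absorbing hyperideal of $H_1\times H_2$ if and only if $P_1$ and $P_2$ are sdf-absorbing hyperideals of $H_1$ and $H_2$, respectively, and $1_{H_1}+1_{H_1}\in P_1$ or $1_{H_2}+1_{H_2}\in P_2$.
   Context: A commutative multiplicative hyperring $(H,+,\circ)$ consists of an abelian group $(H,+)$ and an associative, commutative hyperoperation $\circ: H\times H\to P^*(H)$ with $x\circ(y+z)\subseteq x\circ y+x\circ z$ and $x\circ(-y)=-(x\circ y)=(-x)\circ y$. For subsets $A,B$, $A\circ B=\bigcup_{a\in A,b\in B}a\circ b$, $A\pm B=\{a\pm b\}$; $x^2=x\circ x$. Identity: $x\in x\circ 1$ for all $x$. $H_1\times H_2$ is the hyperring with $(x_1,x_2)+(y_1,y_2)=(x_1+_1y_1,x_2+_2y_2)$ and $(x_1,x_2)\circ(y_1,y_2)=\{(a,b): a\in x_1\circ_1y_1, b\in x_2\circ_2y_2\}$. A hyperideal is a nonempty $P$ with $x-y\in P$ and $r\circ x\subseteq P$ for $x,y\in P$, $r\in H$. Let $\mathcal{C}=\{c_1\circ\cdots\circ c_n: c_i\in H\}$ and $\mathfrak{C}=\{\sum_{i=1}^m C_i: C_i\in\mathcal{C}\}$; $P$ is a strong $\mathcal{C}$-hyperideal if for every $D\in\mathfrak{C}$,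 $D\cap P\neq\varnothing$ implies $D\subseteq P$. A proper hyperideal $P$ is sdf-absorbing if whenever $x,y$ are nonzero and $x^2-y^2\subseteq P$, then $x-y\in P$ or $x+y\in P$. *)

theory Defs
  imports Main "HOL-Library.Product_Plus"
begin

text \<open>A commutative multiplicative hyperring on a type 'a: the additive abelian group
  is the type-class structure of 'a (class ab_group_add), the hyperoperation is
  m :: 'a => 'a => 'a set (values in the nonempty subsets of 'a).\<close>

definition hset_mult :: "('a \<Rightarrow> 'a \<Rightarrow> 'a set) \<Rightarrow> 'a set \<Rightarrow> 'a set \<Rightarrow> 'a set" where
  "hset_mult m A B = (\<Union>a\<in>A. \<Union>b\<in>B. m a b)"

definition hset_plus :: "'a::plus set \<Rightarrow> 'a set \<Rightarrow> 'a set" where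
  "hset_plus A B = {a + b | a b. a \<in> A \<and> b \<in> B}"

definition hset_minus :: "'a::minus set \<Rightarrow> 'a set \<Rightarrow> 'a set" where
  "hset_minus A B = {a - b | a b. a \<in> A \<and> b \<in> B}"

definition comm_mult_hyperring :: "('a::ab_group_add \<Rightarrow> 'a \<Rightarrow> 'a set) \<Rightarrow> bool" where
  "comm_mult_hyperring m \<longleftrightarrow>
     (\<forall>x y. m x y \<noteq> {}) \<and>
     (\<forall>x y z. hset_mult m (m x y) {z} = hset_mult m {x} (m y z)) \<and>
     (\<forall>x y. m x y = m y x) \<and>
     (\<forall>x y z. m x (y + z) \<subseteq> hset_plus (m x y) (m x z)) \<and>
     (\<forall>x y. m x (- y) = uminus ` (m x y) \<and> m (- x) y = uminus ` (m x y))"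

definition hyperring_identity :: "('a \<Rightarrow> 'a \<Rightarrow> 'a set) \<Rightarrow> 'a \<Rightarrow> bool" where
  "hyperring_identity m e \<longleftrightarrow> (\<forall>x. x \<in> m x e)"

text \<open>Product hyperring H1 x H2 (addition is componentwise via Product_Plus).\<close>
definition prod_hmult :: "('a \<Rightarrow> 'a \<Rightarrow> 'a set) \<Rightarrow> ('b \<Rightarrow> 'b \<Rightarrow> 'b set)
    \<Rightarrow> ('a \<times> 'b) \<Rightarrow> ('a \<times> 'b) \<Rightarrow> ('a \<times> 'b) set" where
  "prod_hmult m1 m2 x y = m1 (fst x) (fst y) \<times> m2 (snd x) (snd y)"

definition hyperideal :: "('a::ab_group_add \<Rightarrow> 'a \<Rightarrow> 'a set) \<Rightarrow> 'a set \<Rightarrow> bool" where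
  "hyperideal m P \<longleftrightarrow> P \<noteq> {} \<and> (\<forall>x\<in>P. \<forall>y\<in>P. x - y \<in> P) \<and> (\<forall>r. \<forall>x\<in>P. m r x \<subseteq> P)"

fun hprod_list :: "('a \<Rightarrow> 'a \<Rightarrow> 'a set) \<Rightarrow> 'a list \<Rightarrow> 'a set" where
  "hprod_list m [] = {}"
| "hprod_list m (c # cs) = foldl (\<lambda>A d. hset_mult m A {d}) {c} cs"

definition classC :: "('a \<Rightarrow> 'a \<Rightarrow> 'a set) \<Rightarrow> 'a set set" where
  "classC m = {hprod_list m cs | cs. cs \<noteq> []}"

fun hsum_list :: "'a::monoid_add set list \<Rightarrow> 'a set" where
  "hsum_list [] = {0}"
| "hsum_list (C # Cs) = hset_plus C (hsum_list Cs)"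

definition frakC :: "('a::monoid_add \<Rightarrow> 'a \<Rightarrow> 'a set) \<Rightarrow> 'a set set" where
  "frakC m = {hsum_list Cs | Cs. Cs \<noteq> [] \<and> set Cs \<subseteq> classC m}"

definition strong_C_hyperideal :: "('a::ab_group_add \<Rightarrow> 'a \<Rightarrow> 'a set) \<Rightarrow> 'a set \<Rightarrow> bool" where
  "strong_C_hyperideal m P \<longleftrightarrow> hyperideal m P \<and>
     (\<forall>D\<in>frakC m. D \<inter> P \<noteq> {} \<longrightarrow> D \<subseteq> P)"

definition sdf_absorbing :: "('a::ab_group_add \<Rightarrow> 'a \<Rightarrow> 'a set) \<Rightarrow> 'a set \<Rightarrow> bool" where
  "sdf_absorbing m P \<longleftrightarrow> hyperideal m P \<and> P \<noteq> UNIV \<and>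
     (\<forall>x y. x \<noteq> 0 \<longrightarrow> y \<noteq> 0 \<longrightarrow> hset_minus (m x x) (m y y) \<subseteq> P \<longrightarrow>
        x - y \<in> P \<or> x + y \<in> P)"

end

theory Submission
  imports Defs
begin

lemma hi_zero: "hyperideal m P \<Longrightarrow> 0 \<in> P"
  unfolding hyperideal_def by (metis all_not_in_conv diff_self)

lemma hi_diff: "hyperideal m P \<Longrightarrow> a \<in> P \<Longrightarrow> b \<in> P \<Longrightarrow> a - b \<in> P"
  unfolding hyperideal_def by blast

lemma hi_neg: "hyperideal m P \<Longrightarrow> a \<in> P \<Longrightarrow> - a \<in> P"
  using hi_diff[of m P 0 a] hi_zero[of m P] by simp

lemma hi_add: "hyperideal m P \<Longrightarrow> a \<in> P \<Longrightarrow> b \<in> P \<Longrightarrow> a + b \<in> P"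
  using hi_diff[of m P a "- b"] hi_neg[of m P b] by simp

lemma hi_mult: "hyperideal m P \<Longrightarrow> x \<in> P \<Longrightarrow> m r x \<subseteq> P"
  unfolding hyperideal_def by blast

lemma cmh_ne: "comm_mult_hyperring m \<Longrightarrow> m x y \<noteq> {}"
  unfolding comm_mult_hyperring_def by (elim conjE) (erule allE[of _ x], erule allE[of _ y], assumption)

lemma cmh_neg1: "comm_mult_hyperring m \<Longrightarrow> m (- x) y = uminus ` m x y"
  unfolding comm_mult_hyperring_def by (elim conjE) (erule allE[of _ x], erule allE[of _ y], erule conjE, assumption)

lemma cmh_neg2: "comm_mult_hyperring m \<Longrightarrow> m x (- y) = uminus ` m x y"
  unfolding comm_mult_hyperring_def by (elim conjE) (erule allE[of _ x], erule allE[of _ y], erule conjE, assumption)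

lemma cmh_dist: "comm_mult_hyperring m \<Longrightarrow> m x (y + z) \<subseteq> hset_plus (m x y) (m x z)"
  unfolding comm_mult_hyperring_def by (elim conjE) (erule allE[of _ x], erule allE[of _ y], erule allE[of _ z], assumption)

lemma classC_mem: "m a b \<in> classC m"
proof -
  have "hprod_list m [a, b] = m a b" by (simp add: hset_mult_def)
  then show ?thesis unfolding classC_def by (metis (mono_tags, lifting) list.distinct(1) mem_Collect_eq)
qed

lemma frakC_mem: "{u + v | u v. u \<in> m a b \<and> v \<in> m c d} \<in> frakC m"
proof -
  have "hsum_list [m a b, m c d] = {u + v | u v. u \<in> m a b \<and> v \<in> m c d}"
    by (auto simp add: hset_plus_def)
  then show ?thesis unfolding frakC_def using classC_mem[of m] 
    by (metis (mono_tags, lifting) empty_subsetI insert_subset list.distinct(1) list.set(1) list.set(2) mem_Collect_eq)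
qed

lemma strong_use:
  assumes "strong_C_hyperideal m P" "w \<in> P" "u \<in> m a b" "v \<in> m c d" "w = u + v"
    "u' \<in> m a b" "v' \<in> m c d"
  shows "u' + v' \<in> P"
proof -
  let ?D = "{u + v | u v. u \<in> m a b \<and> v \<in> m c d}"
  have "?D \<in> frakC m" by (rule frakC_mem)
  moreover have "w \<in> ?D" using assms by blast
  moreover have "\<forall>D\<in>frakC m. D \<inter> P \<noteq> {} \<longrightarrow> D \<subseteq> P"
    using assms(1) unfolding strong_C_hyperideal_def by (rule conjunct2)
  ultimately have "?D \<subseteq> P" using assms(2) by (meson disjoint_iff)
  then show ?thesis using assms(6,7) by blast
qed

lemma sq_sub:
  assumes "hyperideal m P" "comm_mult_hyperring m" "hset_minus (m x x) (m y y) \<subseteq> P" "m y y \<subseteq> P"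
  shows "m x x \<subseteq> P"
proof
  fix b assume b: "b \<in> m x x"
  obtain c where c: "c \<in> m y y" using cmh_ne[OF assms(2)] by blast
  have "b - c \<in> P" using assms(3) b c unfolding hset_minus_def by blast
  then have "(b - c) + c \<in> P" using hi_add[OF assms(1)] c assms(4) by blast
  then show "b \<in> P" by simp
qed

lemma sq_sub2:
  assumes "hyperideal m P" "comm_mult_hyperring m" "hset_minus (m x x) (m y y) \<subseteq> P" "m x x \<subseteq> P"
  shows "m y y \<subseteq> P"
proof
  fix b assume b: "b \<in> m y y"
  obtain c where c: "c \<in> m x x" using cmh_ne[OF assms(2)] by blast
  have "c - b \<in> P" using assms(3) b c unfolding hset_minus_def by blast
  then have "c - (c - b) \<in> P" using hi_diff[OF assms(1)] c assms(4) by blast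
  then show "b \<in> P" by simp
qed

lemma sq_in:
  assumes "comm_mult_hyperring m" "sdf_absorbing m P" "P \<noteq> {0}" "m y y \<subseteq> P"
  shows "y \<in> P"
proof (cases "y = 0")
  case True
  then show ?thesis using assms(2) hi_zero unfolding sdf_absorbing_def by blast
next
  case False
  have hi: "hyperideal m P" using assms(2) unfolding sdf_absorbing_def by blast
  obtain a where a: "a \<in> P" "a \<noteq> 0" using assms(3) hi_zero[OF hi] by blast
  have aa: "m a a \<subseteq> P" using hi_mult[OF hi a(1)] .
  have "hset_minus (m y y) (m a a) \<subseteq> P"
    unfolding hset_minus_def using aa assms(4) hi_diff[OF hi] by blast
  then have "y - a \<in> P \<or> y + a \<in> P" using assms(2) False a(2) unfolding sdf_absorbing_def by blast
  then show ?thesis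
  proof
    assume "y - a \<in> P" then have "(y - a) + a \<in> P" using hi_add[OF hi] a by blast
    then show ?thesis by simp
  next
    assume "y + a \<in> P" then have "(y + a) - a \<in> P" using hi_diff[OF hi] a by blast
    then show ?thesis by simp
  qed
qed

lemma sdf_all:
  assumes "comm_mult_hyperring m" "sdf_absorbing m P" "P \<noteq> {0}"
    "hset_minus (m x x) (m y y) \<subseteq> P"
  shows "x - y \<in> P \<or> x + y \<in> P"
proof -
  have hi: "hyperideal m P" using assms(2) unfolding sdf_absorbing_def by blast
  show ?thesis
  proof (cases "x = 0")
    case True
    have "m x x \<subseteq> P" using True hi_mult[OF hi hi_zero[OF hi]] by simp
    then have "m y y \<subseteq> P" using sq_sub2[OF hi assms(1) assms(4)] by blast
    then have "y \<in> P" using sq_in assms by blast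
    then show ?thesis using True hi_neg[OF hi] by simp
  next
    case xn: False
    show ?thesis
    proof (cases "y = 0")
      case True
      have "m y y \<subseteq> P" using True hi_mult[OF hi hi_zero[OF hi]] by simp
      then have "m x x \<subseteq> P" using sq_sub[OF hi assms(1) assms(4)] by blast
      then have "x \<in> P" using sq_in assms by blast
      then show ?thesis using True by simp
    next
      case False
      then show ?thesis using xn assms(2,4) unfolding sdf_absorbing_def by blast
    qed
  qed
qed

lemma two_in:
  assumes "comm_mult_hyperring m" "hyperring_identity m e" "strong_C_hyperideal m P" "e + e \<in> P"
  shows "r + r \<in> P"
proof -
  have hi: "hyperideal m P" using assms(3) unfolding strong_C_hyperideal_def by blast
  obtain w where w: "w \<in> m r (e + e)" using cmh_ne[OF assms(1)] by blast
  have wP: "w \<in> P" using w hi_mult[OF hi assms(4)] by blast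
  from w cmh_dist[OF assms(1), of r e e] obtain u v where "u \<in> m r e" "v \<in> m r e" "w = u + v"
    unfolding hset_plus_def by blast
  moreover have "r \<in> m r e" using assms(2) unfolding hyperring_identity_def by blast
  ultimately show ?thesis using strong_use[OF assms(3) wP] by blast
qed

lemma both_in:
  assumes "hyperideal m P" "\<And>r. r + r \<in> P" "x - y \<in> P \<or> x + y \<in> P"
  shows "x - y \<in> P \<and> x + y \<in> P"
proof -
  have "x + y = (x - y) + (y + y)" "x - y = (x + y) - (y + y)" by (simp_all add: algebra_simps)
  then show ?thesis using assms hi_add[OF assms(1)] hi_diff[OF assms(1)] by metis
qed

lemma diff_sq_in:
  assumes "comm_mult_hyperring m" "hyperring_identity m e" "strong_C_hyperideal m P"
  shows "hset_minus (m e e) (m e e) \<subseteq> P"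
proof
  fix z assume "z \<in> hset_minus (m e e) (m e e)"
  then obtain u v where uv: "u \<in> m e e" "v \<in> m e e" "z = u - v" unfolding hset_minus_def by blast
  have hi: "hyperideal m P" using assms(3) unfolding strong_C_hyperideal_def by blast
  have neg: "m (- e) e = uminus ` m e e" using cmh_neg1[OF assms(1)] .
  have nu: "- u \<in> m (- e) e" and nv: "- v \<in> m (- e) e" using uv neg by auto
  have z0: "0 = u + - u" by simp
  have "u + - v \<in> P" by (rule strong_use[OF assms(3) hi_zero[OF hi] uv(1) nu z0 uv(1) nv])
  then show "z \<in> P" using uv(3) by simp
qed

lemma e_nz:
  assumes "hyperring_identity m e" "hyperideal m P" "P \<noteq> UNIV"
  shows "e \<noteq> 0"
proof
  assume "e = 0"
  then have "\<And>x. x \<in> P" using assms(1) hi_mult[OF assms(2) hi_zero[OF assms(2)]]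
    unfolding hyperring_identity_def by blast
  then show False using assms(3) by blast
qed

lemma cmh_negneg: "comm_mult_hyperring m \<Longrightarrow> m (- x) (- y) = m x y"
  using cmh_neg1[of m x "- y"] cmh_neg2[of m x y] by (simp add: image_image)

lemma prod_minus:
  "hset_minus (prod_hmult m1 m2 x x) (prod_hmult m1 m2 y y) =
    hset_minus (m1 (fst x) (fst x)) (m1 (fst y) (fst y)) \<times> hset_minus (m2 (snd x) (snd x)) (m2 (snd y) (snd y))"
  unfolding hset_minus_def prod_hmult_def by (auto simp: prod_eq_iff) (metis fst_conv snd_conv)+

theorem mainTheorem14:
  fixes m1 :: "'a::ab_group_add \<Rightarrow> 'a \<Rightarrow> 'a set"
    and m2 :: "'b::ab_group_add \<Rightarrow> 'b \<Rightarrow> 'b set"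
    and e1 :: 'a and e2 :: 'b and P1 :: "'a set" and P2 :: "'b set"
  assumes "comm_mult_hyperring m1" and "comm_mult_hyperring m2"
    and "hyperring_identity m1 e1" and "hyperring_identity m2 e2"
    and "strong_C_hyperideal m1 P1" and "P1 \<noteq> {0}" and "P1 \<noteq> UNIV"
    and "strong_C_hyperideal m2 P2" and "P2 \<noteq> {0}" and "P2 \<noteq> UNIV"
  shows "sdf_absorbing (prod_hmult m1 m2) (P1 \<times> P2) \<longleftrightarrow>
         (sdf_absorbing m1 P1 \<and> sdf_absorbing m2 P2 \<and> (e1 + e1 \<in> P1 \<or> e2 + e2 \<in> P2))"
proof -
  note A = assms
  have hi1: "hyperideal m1 P1" using A(5) unfolding strong_C_hyperideal_def by blast
  have hi2: "hyperideal m2 P2" using A(8) unfolding strong_C_hyperideal_def by blast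
  have m00: "hset_minus (m1 0 0) (m1 0 0) \<subseteq> P1" "hset_minus (m2 0 0) (m2 0 0) \<subseteq> P2"
  proof -
    have a: "m1 0 0 \<subseteq> P1" using hi_mult[OF hi1 hi_zero[OF hi1]] .
    have b: "m2 0 0 \<subseteq> P2" using hi_mult[OF hi2 hi_zero[OF hi2]] .
    show "hset_minus (m1 0 0) (m1 0 0) \<subseteq> P1" unfolding hset_minus_def
      using a hi_diff[OF hi1] by auto
    show "hset_minus (m2 0 0) (m2 0 0) \<subseteq> P2" unfolding hset_minus_def
      using b hi_diff[OF hi2] by auto
  qed
  have hiP: "hyperideal (prod_hmult m1 m2) (P1 \<times> P2)"
    unfolding hyperideal_def
  proof (intro conjI ballI allI)
    show "P1 \<times> P2 \<noteq> {}" using hi_zero[OF hi1] hi_zero[OF hi2] by blast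
  next
    fix x y assume "x \<in> P1 \<times> P2" "y \<in> P1 \<times> P2"
    then show "x - y \<in> P1 \<times> P2" using hi_diff[OF hi1] hi_diff[OF hi2] by (auto simp: mem_Times_iff)
  next
    fix r x assume "x \<in> P1 \<times> P2"
    then show "prod_hmult m1 m2 r x \<subseteq> P1 \<times> P2" unfolding prod_hmult_def
      using hi_mult[OF hi1] hi_mult[OF hi2] by (auto simp: mem_Times_iff) blast+
  qed
  show ?thesis
  proof
    assume S: "sdf_absorbing (prod_hmult m1 m2) (P1 \<times> P2)"
    have S3: "\<And>x y. x \<noteq> 0 \<Longrightarrow> y \<noteq> 0 \<Longrightarrow> hset_minus (prod_hmult m1 m2 x x) (prod_hmult m1 m2 y y) \<subseteq> P1 \<times> P2
       \<Longrightarrow> x - y \<in> P1 \<times> P2 \<or> x + y \<in> P1 \<times> P2" using S unfolding sdf_absorbing_def by blast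
    have s1: "sdf_absorbing m1 P1" unfolding sdf_absorbing_def
    proof (intro conjI allI impI)
      fix x y :: 'a assume "x \<noteq> 0" "y \<noteq> 0" and h: "hset_minus (m1 x x) (m1 y y) \<subseteq> P1"
      then have "(x, 0::'b) - (y, 0) \<in> P1 \<times> P2 \<or> (x, 0::'b) + (y, 0) \<in> P1 \<times> P2"
      proof -
        have "hset_minus (prod_hmult m1 m2 (x, 0) (x, 0)) (prod_hmult m1 m2 (y, 0) (y, 0)) \<subseteq> P1 \<times> P2"
          using h m00(2) by (auto simp: prod_minus)
        moreover have "(x, 0::'b) \<noteq> 0" "(y, 0::'b) \<noteq> 0" using \<open>x \<noteq> 0\<close> \<open>y \<noteq> 0\<close> by (simp_all add: zero_prod_def)
        ultimately show ?thesis using S3 by blast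
      qed
      then show "x - y \<in> P1 \<or> x + y \<in> P1" by auto
    qed (use hi1 A(7) in auto)
    have s2: "sdf_absorbing m2 P2" unfolding sdf_absorbing_def
    proof (intro conjI allI impI)
      fix x y :: 'b assume "x \<noteq> 0" "y \<noteq> 0" and h: "hset_minus (m2 x x) (m2 y y) \<subseteq> P2"
      then have "(0::'a, x) - (0, y) \<in> P1 \<times> P2 \<or> (0::'a, x) + (0, y) \<in> P1 \<times> P2"
      proof -
        have "hset_minus (prod_hmult m1 m2 (0, x) (0, x)) (prod_hmult m1 m2 (0, y) (0, y)) \<subseteq> P1 \<times> P2"
          using h m00(1) by (auto simp: prod_minus)
        moreover have "(0::'a, x) \<noteq> 0" "(0::'a, y) \<noteq> 0" using \<open>x \<noteq> 0\<close> \<open>y \<noteq> 0\<close> by (simp_all add: zero_prod_def)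
        ultimately show ?thesis using S3 by blast
      qed
      then show "x - y \<in> P2 \<or> x + y \<in> P2" by auto
    qed (use hi2 A(10) in auto)
    have "e1 \<noteq> 0" using e_nz[OF A(3) hi1 A(7)] .
    then have nz: "(e1, e2) \<noteq> 0" "(e1, - e2) \<noteq> 0" by (simp_all add: zero_prod_def)
    have "hset_minus (prod_hmult m1 m2 (e1, e2) (e1, e2)) (prod_hmult m1 m2 (e1, - e2) (e1, - e2)) \<subseteq> P1 \<times> P2"
      using diff_sq_in[OF A(1) A(3) A(5)] diff_sq_in[OF A(2) A(4) A(8)] cmh_negneg[OF A(2)]
      by (simp add: prod_minus) blast
    then have "(e1, e2) - (e1, - e2) \<in> P1 \<times> P2 \<or> (e1, e2) + (e1, - e2) \<in> P1 \<times> P2"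
      using S3[OF nz] by blast
    then have "e1 + e1 \<in> P1 \<or> e2 + e2 \<in> P2" by auto
    with s1 s2 show "sdf_absorbing m1 P1 \<and> sdf_absorbing m2 P2 \<and> (e1 + e1 \<in> P1 \<or> e2 + e2 \<in> P2)" by blast
  next
    assume R: "sdf_absorbing m1 P1 \<and> sdf_absorbing m2 P2 \<and> (e1 + e1 \<in> P1 \<or> e2 + e2 \<in> P2)"
    show "sdf_absorbing (prod_hmult m1 m2) (P1 \<times> P2)" unfolding sdf_absorbing_def
    proof (intro conjI allI impI)
      show "P1 \<times> P2 \<noteq> UNIV" using A(7) by auto
    next
      fix x y :: "'a \<times> 'b"
      assume "x \<noteq> 0" "y \<noteq> 0" and h: "hset_minus (prod_hmult m1 m2 x x) (prod_hmult m1 m2 y y) \<subseteq> P1 \<times> P2"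
      obtain a1 b1 where "a1 \<in> m1 (fst x) (fst x)" "b1 \<in> m1 (fst y) (fst y)" using cmh_ne[OF A(1)] by (meson ex_in_conv)
      then have ne1: "a1 - b1 \<in> hset_minus (m1 (fst x) (fst x)) (m1 (fst y) (fst y))"
        unfolding hset_minus_def by blast
      obtain a2 b2 where "a2 \<in> m2 (snd x) (snd x)" "b2 \<in> m2 (snd y) (snd y)" using cmh_ne[OF A(2)] by (meson ex_in_conv)
      then have ne2: "a2 - b2 \<in> hset_minus (m2 (snd x) (snd x)) (m2 (snd y) (snd y))"
        unfolding hset_minus_def by blast
      have h': "hset_minus (m1 (fst x) (fst x)) (m1 (fst y) (fst y)) \<times> hset_minus (m2 (snd x) (snd x)) (m2 (snd y) (snd y)) \<subseteq> P1 \<times> P2"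
        using h unfolding prod_minus .
      have h1: "hset_minus (m1 (fst x) (fst x)) (m1 (fst y) (fst y)) \<subseteq> P1"
      proof
        fix z assume "z \<in> hset_minus (m1 (fst x) (fst x)) (m1 (fst y) (fst y))"
        then have "(z, a2 - b2) \<in> P1 \<times> P2" using h' ne2 by blast
        then show "z \<in> P1" by simp
      qed
      have h2: "hset_minus (m2 (snd x) (snd x)) (m2 (snd y) (snd y)) \<subseteq> P2"
      proof
        fix z assume "z \<in> hset_minus (m2 (snd x) (snd x)) (m2 (snd y) (snd y))"
        then have "(a1 - b1, z) \<in> P1 \<times> P2" using h' ne1 by blast
        then show "z \<in> P2" by simp
      qed
      have c1: "fst x - fst y \<in> P1 \<or> fst x + fst y \<in> P1" using sdf_all[OF A(1) _ A(6) h1] R by blast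
      have c2: "snd x - snd y \<in> P2 \<or> snd x + snd y \<in> P2" using sdf_all[OF A(2) _ A(9) h2] R by blast
      from R show "x - y \<in> P1 \<times> P2 \<or> x + y \<in> P1 \<times> P2"
      proof (elim conjE disjE)
        assume "e1 + e1 \<in> P1"
        then have "\<And>r. r + r \<in> P1" using two_in[OF A(1) A(3) A(5)] by blast
        then have "fst x - fst y \<in> P1 \<and> fst x + fst y \<in> P1" using both_in[OF hi1] c1 by blast
        then show ?thesis using c2 by (auto simp: mem_Times_iff)
      next
        assume "e2 + e2 \<in> P2"
        then have "\<And>r. r + r \<in> P2" using two_in[OF A(2) A(4) A(8)] by blast
        then have "snd x - snd y \<in> P2 \<and> snd x + snd y \<in> P2" using both_in[OF hi2] c2 by blast
        then show ?thesis using c1 by (auto simp: mem_Times_iff)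
      qed
    qed (use hiP in auto)
  qed
qed

end
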